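(* Consider a repeater chain in the model described in the context with $M+N+1$ nodes labelled $1,\dots,M+N+1$. Suppose nodes $1,\dots,M$ are at fixed locations, with fixed distances between consecutive ones (so the lengths of edges $1,\dots,M-1$ are fixed constants). Suppose nodes $M$ and $M+N+1$ are a distance $L$ apart and the $N$ repeater nodes $M+1,\dots,M+N$ are placed along a straight line between them. Let $\ell_i\ge0$ be the distance between nodes $M+i-1$ and $M+i$ for $i=1,\dots,N+1$, with $\sum_i\ell_i=L$. Then the entangling rate $R$ of the chain, as a function of $(\ell_1,\dots,\ell_{N+1})$, is maximal when $\ell_i=L/(N+1)$ for all $i$.
   Context: Repeater-chain model (swap-ASAP, synchronized attempts). Edge $j$ connects nodes $j$ and $j+1$ and has length $l_j\ge0$ (km). Entanglement generation proceeds in synchronized rounds of duration $t_{\mathrm{att}}=\frac1c\max_jl_j$ with $c=200{,}000$ km/s. In each round, every edge not yet successful makes an attempt succeeding independently with probability $p_j=10^{-\alpha l_j/10}$, $\alpha=0.2\ \mathrm{km}^{-1}$. So the number of rounds $X_j$ until edge $j$ succeeds is geometric on $\{1,2,\dots\}$ with parameter $p_j$, the $X_j$ are independent, and end-to-end entanglement completes at time $T_{\mathrm{done}}=t_{\mathrm{att}}\max_jX_j$. The entangling rate is $R=1/\mathbb E[T_{\mathrm{done}}]$. *)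

theory Defs
  imports "HOL-Probability.Probability"
begin

text \<open>Physical constants: speed of light in fibre c (km/s) and attenuation alpha (1/km).\<close>
definition c_light :: real where "c_light = 200000"
definition alpha_att :: real where "alpha_att = 0.2"

definition succ_prob :: "real \<Rightarrow> real" where
  "succ_prob l = 10 powr (- alpha_att * l / 10)"

definition t_att :: "nat \<Rightarrow> (nat \<Rightarrow> real) \<Rightarrow> real" where
  "t_att K l = (Max (l ` {..<K})) / c_light"

text \<open>Joint law of the numbers of rounds X_j (geometric on 1,2,..., independent).\<close>
definition rounds_pmf :: "nat \<Rightarrow> (nat \<Rightarrow> real) \<Rightarrow> (nat \<Rightarrow> nat) pmf" where
  "rounds_pmf K l = Pi_pmf {..<K} 0 (\<lambda>j. map_pmf Suc (geometric_pmf (succ_prob (l j))))"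

definition T_done :: "nat \<Rightarrow> (nat \<Rightarrow> real) \<Rightarrow> (nat \<Rightarrow> nat) \<Rightarrow> real" where
  "T_done K l X = t_att K l * real (Max (X ` {..<K}))"

definition ent_rate :: "nat \<Rightarrow> (nat \<Rightarrow> real) \<Rightarrow> real" where
  "ent_rate K l = 1 / measure_pmf.expectation (rounds_pmf K l) (T_done K l)"

text \<open>Edge lengths of the chain: edges 0..M-2 (paper's edges 1..M-1) have the fixed
  lengths d, edges M-1..M+N-1 (paper's edges M..M+N) have lengths ell 0..ell N
  (paper's ell_1..ell_{N+1}).\<close>
definition chain_lengths :: "nat \<Rightarrow> (nat \<Rightarrow> real) \<Rightarrow> (nat \<Rightarrow> real) \<Rightarrow> nat \<Rightarrow> real" where
  "chain_lengths M d ell j = (if j < M - 1 then d j else ell (j - (M - 1)))"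

end

theory Submission
  imports Defs
begin


lemma mono_ratio:
  fixes x y :: real
  assumes n: "n \<ge> 1" and "0 \<le> x" "x \<le> y"
  shows "real n * x^(n-1) / (\<Sum>k<n. x^k) \<le> real n * y^(n-1) / (\<Sum>k<n. y^k)"
proof -
  have Sx: "(\<Sum>k<n. x^k) \<ge> 1"
  proof -
    have "(\<Sum>k<n. x^k) = x^0 + (\<Sum>k\<in>{1..<n}. x^k)"
      using n by (metis One_nat_def Suc_le_D lessThan_atLeast0 sum.atLeast_Suc_lessThan zero_less_Suc)
    moreover have "(\<Sum>k\<in>{1..<n}. x^k) \<ge> 0" using assms by (auto intro!: sum_nonneg)
    ultimately show ?thesis by simp
  qed
  have Sy: "(\<Sum>k<n. y^k) \<ge> 1"
  proof -
    have "(\<Sum>k<n. y^k) = y^0 + (\<Sum>k\<in>{1..<n}. y^k)"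
      using n by (metis One_nat_def Suc_le_D lessThan_atLeast0 sum.atLeast_Suc_lessThan zero_less_Suc)
    moreover have "(\<Sum>k\<in>{1..<n}. y^k) \<ge> 0" using assms by (auto intro!: sum_nonneg)
    ultimately show ?thesis by simp
  qed
  have key: "x^(n-1) * (\<Sum>k<n. y^k) \<le> y^(n-1) * (\<Sum>k<n. x^k)"
    unfolding sum_distrib_left
  proof (rule sum_mono)
    fix k assume "k \<in> {..<n}"
    then obtain m where m: "n - 1 = k + m" by (metis add_diff_inverse_nat lessThan_iff less_imp_diff_less not_less_eq less_Suc_eq_le Suc_pred' gr_zeroI less_nat_zero_code le_add_diff_inverse Suc_leI diff_Suc_1 less_imp_le_nat le_Suc_ex)
    have "x^m \<le> y^m" using assms by (intro power_mono) auto
    hence "x^k * y^k * x^m \<le> x^k * y^k * y^m" using assms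
      by (intro mult_left_mono) auto
    thus "x^(n-1) * y^k \<le> y^(n-1) * x^k" unfolding m power_add by (simp add: algebra_simps)
  qed
  show ?thesis using Sx Sy key
    by (simp add: divide_simps) (smt (verit, best) mult_left_mono of_nat_0_le_iff mult.assoc mult.commute)
qed

definition psi :: "nat \<Rightarrow> real \<Rightarrow> real" where
  "psi n s = - ln (1 - (1 - exp (-s))^n)"

lemma psi_arg_pos:
  assumes "s \<ge> 0" "n \<ge> 1" shows "1 - (1 - exp (-s))^n > (0::real)"
proof -
  have "0 \<le> 1 - exp (-s)" "1 - exp (-s) < 1" using assms by auto
  hence "(1 - exp (-s))^n < 1^n" using assms by (intro power_strict_mono) auto
  thus ?thesis by simp
qed

lemma psi_convex:
  assumes n: "n \<ge> 1"
  shows "convex_on {0..} (psi n)"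
proof -
  define D where "D s = real n * (1 - exp (-s))^(n-1) * exp (-s) / (1 - (1 - exp (-s))^n)" for s
  show ?thesis
  proof (rule convex_on_realI[where f' = D])
    show "connected {0::real..}" by simp
  next
    fix s :: real assume "s \<in> {0..}"
    hence pos: "1 - (1 - exp (-s))^n > 0" using psi_arg_pos n by auto
    show "(psi n has_real_derivative D s) (at s)"
      unfolding psi_def[abs_def] D_def
      using pos by (auto intro!: derivative_eq_intros simp: field_simps)
  next
    have Dx: "D s = real n * (1 - exp (-s))^(n-1) / (\<Sum>k<n. (1 - exp (-s))^k)" if "s \<ge> 0" for s
    proof -
      have "exp (-s) > 0" by simp
      have "1 - (1 - exp (-s))^n = exp (-s) * (\<Sum>k<n. (1 - exp (-s))^k)"
        by (subst one_diff_power_eq) simp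
      thus ?thesis unfolding D_def using \<open>exp (-s) > 0\<close> by simp
    qed
    fix s t :: real assume "s \<in> {0..}" "t \<in> {0..}" "s \<le> t"
    thus "D s \<le> D t" using Dx mono_ratio[OF n, of "1 - exp (-s)" "1 - exp (-t)"] by auto
  qed
qed



lemma succ_prob_exp: "succ_prob x = exp (- ((ln 10 / 50) * x))"
  unfolding succ_prob_def alpha_att_def powr_def by (simp add: field_simps)

lemma succ_prob_bounds: assumes "x \<ge> 0" shows "0 < succ_prob x" "succ_prob x \<le> 1"
  using assms unfolding succ_prob_exp by auto

definition gfun :: "nat \<Rightarrow> real \<Rightarrow> real" where
  "gfun n x = 1 - (1 - succ_prob x)^n"

lemma gfun_bounds: assumes "x \<ge> 0" shows "0 \<le> gfun n x" "gfun n x \<le> 1"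
proof -
  have "0 \<le> 1 - succ_prob x" "1 - succ_prob x \<le> 1" using succ_prob_bounds[OF assms] by auto
  hence "(1 - succ_prob x)^n \<le> 1" "0 \<le> (1 - succ_prob x)^n" by (auto intro: power_le_one)
  thus "0 \<le> gfun n x" "gfun n x \<le> 1" unfolding gfun_def by auto
qed

lemma gfun_psi: assumes "x \<ge> 0" "n \<ge> 1"
  shows "gfun n x = exp (- psi n ((ln 10 / 50) * x))"
proof -
  have "(ln 10 / 50) * x \<ge> 0" using assms by simp
  from psi_arg_pos[OF this assms(2)] show ?thesis
    unfolding gfun_def psi_def succ_prob_exp by simp
qed

lemma jensen_part:
  assumes n: "n \<ge> 1" and nn: "\<forall>i < N + 1. ell i \<ge> 0" and L: "(\<Sum>i<N + 1. ell i) = L"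
  shows "(\<Prod>i<N+1. gfun n (ell i)) \<le> gfun n (L / real (N + 1)) ^ (N + 1)"
proof -
  define k :: real where "k = ln 10 / 50"
  have k: "k > 0" unfolding k_def by simp
  have L0: "L \<ge> 0" using nn L by (metis lessThan_iff sum_nonneg)
  have J: "psi n (\<Sum>i<N+1. (1 / real (N+1)) *\<^sub>R (k * ell i)) \<le> (\<Sum>i<N+1. (1 / real (N+1)) * psi n (k * ell i))"
    by (rule convex_on_sum[OF _ _ psi_convex[OF n]]) (use nn k in auto)
  have "(\<Sum>i<N+1. (1 / real (N+1)) *\<^sub>R (k * ell i)) = k * (L / real (N+1))"
  proof -
    have "(\<Sum>i<N+1. (1 / real (N+1)) *\<^sub>R (k * ell i)) = (k / real (N+1)) * (\<Sum>i<N+1. ell i)"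
      unfolding sum_distrib_left by (intro sum.cong refl) simp
    thus ?thesis using L by simp
  qed
  hence J2: "real (N+1) * psi n (k * (L / real (N+1))) \<le> (\<Sum>i<N+1. psi n (k * ell i))"
  proof -
    assume eq: "(\<Sum>i<N+1. (1 / real (N+1)) *\<^sub>R (k * ell i)) = k * (L / real (N+1))"
    have "psi n (k * (L / real (N+1))) \<le> (1 / real (N+1)) * (\<Sum>i<N+1. psi n (k * ell i))"
      using J unfolding eq sum_distrib_left .
    hence "real (N+1) * psi n (k * (L / real (N+1))) \<le> real (N+1) * ((1 / real (N+1)) * (\<Sum>i<N+1. psi n (k * ell i)))"
      by (intro mult_left_mono) auto
    thus ?thesis by simp
  qed
  have "(\<Prod>i<N+1. gfun n (ell i)) = (\<Prod>i<N+1. exp (- psi n (k * ell i)))"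
    using nn n by (intro prod.cong refl) (simp add: gfun_psi k_def)
  also have "\<dots> = exp (- (\<Sum>i<N+1. psi n (k * ell i)))"
    by (simp only: exp_sum[OF finite_lessThan] sum_negf[symmetric])
  also have "\<dots> \<le> exp (- (real (N+1) * psi n (k * (L / real (N+1)))))"
    using J2 by simp
  also have "\<dots> = exp (- psi n (k * (L / real (N+1)))) ^ (N+1)"
    by (metis exp_of_nat_mult mult_minus_right)
  also have "\<dots> = gfun n (L / real (N + 1)) ^ (N + 1)"
    using L0 n by (simp add: gfun_psi k_def)
  finally show ?thesis .
qed



lemma geom_cdf:
  assumes "0 < q" "q \<le> 1"
  shows "measure_pmf.prob (map_pmf Suc (geometric_pmf q)) {..n} = 1 - (1 - q)^n"
proof -
  have "measure_pmf.prob (map_pmf Suc (geometric_pmf q)) {..n} = measure_pmf.prob (geometric_pmf q) (Suc -` {..n})"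
    by (simp add: measure_map_pmf)
  also have "Suc -` {..n} = {..<n}" by auto
  also have "measure_pmf.prob (geometric_pmf q) {..<n} = (\<Sum>k<n. (1-q)^k * q)"
    using assms by (simp add: measure_measure_pmf_finite)
  also have "\<dots> = 1 - (1 - q)^n"
    by (subst one_diff_power_eq) (simp add: sum_distrib_left mult.commute)
  finally show ?thesis .
qed

lemma max_cdf:
  fixes K :: nat and q :: "nat \<Rightarrow> real"
  assumes K: "K > 0" and q: "\<And>j. j < K \<Longrightarrow> 0 < q j \<and> q j \<le> 1"
  shows "measure_pmf.prob (Pi_pmf {..<K} 0 (\<lambda>j. map_pmf Suc (geometric_pmf (q j))))
           {X. Max (X ` {..<K}) \<le> n} = (\<Prod>j<K. 1 - (1 - q j)^n)"
proof -
  have "{X. Max (X ` {..<K}) \<le> n} = Pi {..<K} (\<lambda>_. {..n})"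
  proof -
    have "(Max (X ` {..<K}) \<le> n) = (\<forall>j<K. X j \<le> n)" for X :: "nat \<Rightarrow> nat"
      using K by (subst Max_le_iff) auto
    thus ?thesis by (auto simp: Pi_def)
  qed
  hence "measure_pmf.prob (Pi_pmf {..<K} 0 (\<lambda>j. map_pmf Suc (geometric_pmf (q j))))
           {X. Max (X ` {..<K}) \<le> n} = (\<Prod>j<K. measure_pmf.prob (map_pmf Suc (geometric_pmf (q j))) {..n})"
    by (simp only: measure_Pi_pmf_Pi[OF finite_lessThan])
  also have "\<dots> = (\<Prod>j<K. 1 - (1 - q j)^n)"
  proof (rule prod.cong[OF refl])
    fix j assume "j \<in> {..<K}"
    hence "0 < q j" "q j \<le> 1" using q[of j] by auto
    thus "measure_pmf.prob (map_pmf Suc (geometric_pmf (q j))) {..n} = 1 - (1 - q j)^n" by (rule geom_cdf)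
  qed
  finally show ?thesis .
qed

lemma one_minus_prod_le:
  assumes "finite A" "\<And>j. j \<in> A \<Longrightarrow> 0 \<le> a j \<and> a j \<le> (1::real)"
  shows "1 - (\<Prod>j\<in>A. 1 - a j) \<le> (\<Sum>j\<in>A. a j) \<and> 0 \<le> (\<Prod>j\<in>A. 1 - a j) \<and> (\<Prod>j\<in>A. 1 - a j) \<le> 1"
  using assms
proof (induction A rule: finite_induct)
  case empty then show ?case by simp
next
  case (insert x F)
  let ?P = "\<Prod>j\<in>F. 1 - a j"
  have IH: "1 - ?P \<le> (\<Sum>j\<in>F. a j)" "0 \<le> ?P" "?P \<le> 1" using insert by auto
  have ax: "0 \<le> a x" "a x \<le> 1" using insert by auto
  have "1 - (1 - a x) * ?P \<le> a x + (\<Sum>j\<in>F. a j)"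
  proof -
    have "a x * ?P \<le> a x" using IH ax by (intro mult_left_le) auto
    moreover have "1 - (1 - a x) * ?P = (1 - ?P) + a x * ?P" by (simp add: algebra_simps)
    ultimately show ?thesis using IH by linarith
  qed
  moreover have "0 \<le> (1 - a x) * ?P" "(1 - a x) * ?P \<le> 1"
    using IH ax by (auto intro: mult_le_one mult_nonneg_nonneg)
  ultimately show ?case using insert by simp
qed

lemma expectation_max:
  fixes K :: nat and q :: "nat \<Rightarrow> real"
  assumes K: "K > 0" and q: "\<And>j. j < K \<Longrightarrow> 0 < q j \<and> q j \<le> 1"
  defines "F \<equiv> (\<lambda>n. \<Prod>j<K. 1 - (1 - q j)^n)"
  shows "summable (\<lambda>n. 1 - F n)"
    and "measure_pmf.expectation (Pi_pmf {..<K} 0 (\<lambda>j. map_pmf Suc (geometric_pmf (q j))))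
           (\<lambda>X. real (Max (X ` {..<K}))) = (\<Sum>n. 1 - F n)"
proof -
  let ?P = "Pi_pmf {..<K} 0 (\<lambda>j. map_pmf Suc (geometric_pmf (q j)))"
  have bnd: "1 - F n \<le> (\<Sum>j<K. (1 - q j)^n) \<and> 0 \<le> F n \<and> F n \<le> 1" for n
    unfolding F_def
  proof (rule one_minus_prod_le)
    fix j assume "j \<in> {..<K}"
    then have "0 < q j" "q j \<le> 1" using q[of j] by auto
    then have "0 \<le> 1 - q j" "1 - q j \<le> 1" by auto
    thus "0 \<le> (1 - q j)^n \<and> (1 - q j)^n \<le> 1" by (auto intro: power_le_one)
  qed simp
  have sg: "summable (\<lambda>n. \<Sum>j<K. (1 - q j)^n)"
  proof (intro summable_sum summable_geometric)
    fix j assume "j \<in> {..<K}"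
    hence "0 < q j" "q j \<le> 1" using q by auto
    thus "norm (1 - q j) < 1" by simp
  qed
  show sm: "summable (\<lambda>n. 1 - F n)"
    by (rule summable_comparison_test'[OF sg, of 0]) (use bnd in auto)
  have "measure_pmf.expectation ?P (\<lambda>X. real (Max (X ` {..<K})))
        = enn2real (\<integral>\<^sup>+ X. ennreal (real (Max (X ` {..<K}))) \<partial>?P)"
    by (rule integral_eq_nn_integral) auto
  also have "(\<integral>\<^sup>+ X. ennreal (real (Max (X ` {..<K}))) \<partial>?P) = (\<integral>\<^sup>+ X. of_nat (Max (X ` {..<K})) \<partial>?P)"
    by (simp add: ennreal_of_nat_eq_real_of_nat)
  also have "\<dots> = (\<Sum>t. emeasure ?P {X \<in> space ?P. t < Max (X ` {..<K})})"
    by (rule nn_integral_nat_function) simp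
  also have "\<dots> = (\<Sum>t. ennreal (1 - F t))"
  proof (intro suminf_cong)
    fix t
    have "emeasure ?P {X \<in> space ?P. t < Max (X ` {..<K})} = ennreal (measure_pmf.prob ?P (UNIV - {X. Max (X ` {..<K}) \<le> t}))"
      by (simp add: measure_pmf.emeasure_eq_measure not_le set_diff_eq)
    also have "\<dots> = ennreal (1 - F t)"
      unfolding F_def using measure_pmf.prob_compl[of "{X. Max (X ` {..<K}) \<le> t}" ?P] max_cdf[OF K q, where n=t]
      by simp
    finally show "emeasure ?P {X \<in> space ?P. t < Max (X ` {..<K})} = ennreal (1 - F t)" .
  qed
  also have "\<dots> = ennreal (\<Sum>t. 1 - F t)"
    by (rule suminf_ennreal2) (use bnd sm in auto)
  also have "enn2real \<dots> = (\<Sum>t. 1 - F t)"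
    by (rule enn2real_ennreal) (use bnd sm in \<open>auto intro: suminf_nonneg\<close>)
  finally show "measure_pmf.expectation ?P (\<lambda>X. real (Max (X ` {..<K}))) = (\<Sum>n. 1 - F n)" .
qed



lemma rate_formula:
  fixes K :: nat and l :: "nat \<Rightarrow> real"
  assumes K: "K > 0" and nn: "\<And>j. j < K \<Longrightarrow> l j \<ge> 0"
  shows "summable (\<lambda>n. 1 - (\<Prod>j<K. gfun n (l j)))"
    and "ent_rate K l = 1 / (t_att K l * (\<Sum>n. 1 - (\<Prod>j<K. gfun n (l j))))"
proof -
  have q: "\<And>j. j < K \<Longrightarrow> 0 < succ_prob (l j) \<and> succ_prob (l j) \<le> 1"
    using nn succ_prob_bounds by auto
  note E = expectation_max[OF K q]
  show "summable (\<lambda>n. 1 - (\<Prod>j<K. gfun n (l j)))"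
    using E(1) unfolding gfun_def .
  have "measure_pmf.expectation (rounds_pmf K l) (T_done K l)
      = t_att K l * measure_pmf.expectation (rounds_pmf K l) (\<lambda>X. real (Max (X ` {..<K})))"
    unfolding T_done_def by (rule integral_mult_right_zero)
  also have "measure_pmf.expectation (rounds_pmf K l) (\<lambda>X. real (Max (X ` {..<K})))
      = (\<Sum>n. 1 - (\<Prod>j<K. gfun n (l j)))"
    using E(2) unfolding gfun_def rounds_pmf_def .
  finally show "ent_rate K l = 1 / (t_att K l * (\<Sum>n. 1 - (\<Prod>j<K. gfun n (l j))))"
    unfolding ent_rate_def by simp
qed

lemma prod_split:
  assumes M: "M \<ge> 1"
  shows "(\<Prod>j<M+N. f (chain_lengths M d e j)) = (\<Prod>j<M-1. f (d j)) * (\<Prod>i<N+1. f (e i))"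
proof -
  have U: "{..<M+N} = {..<M-1} \<union> (\<lambda>i. i + (M-1)) ` {..<N+1}"
  proof -
    have "(\<lambda>i. i + (M-1)) ` {..<N+1} = {M-1..<M+N}"
    proof -
      obtain m where m: "M = Suc m" using M by (cases M) auto
      have "(\<lambda>i. i + m) ` {0..<N+1} = {0+m..<N+1+m}" by (rule image_add_atLeastLessThan')
      thus ?thesis unfolding m lessThan_atLeast0 by (simp add: add.commute)
    qed
    thus ?thesis using M by auto
  qed
  have "(\<Prod>j<M+N. f (chain_lengths M d e j)) =
        (\<Prod>j<M-1. f (chain_lengths M d e j)) * (\<Prod>j\<in>(\<lambda>i. i + (M-1)) ` {..<N+1}. f (chain_lengths M d e j))"
    unfolding U by (rule prod.union_disjoint) auto
  also have "(\<Prod>j<M-1. f (chain_lengths M d e j)) = (\<Prod>j<M-1. f (d j))"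
    by (intro prod.cong refl) (simp add: chain_lengths_def)
  also have "(\<Prod>j\<in>(\<lambda>i. i + (M-1)) ` {..<N+1}. f (chain_lengths M d e j)) = (\<Prod>i<N+1. f (e i))"
    by (subst prod.reindex) (auto simp: inj_on_def chain_lengths_def)
  finally show ?thesis .
qed



theorem mainTheorem5:
  fixes M N :: nat and d ell :: "nat \<Rightarrow> real" and L :: real
  assumes "M \<ge> 1"
    and "\<forall>j < M - 1. d j \<ge> 0"
    and "\<forall>i < N + 1. ell i \<ge> 0"
    and "(\<Sum>i<N + 1. ell i) = L"
  shows "ent_rate (M + N) (chain_lengths M d ell)
           \<le> ent_rate (M + N) (chain_lengths M d (\<lambda>_. L / real (N + 1)))"
proof -
  define K where "K = M + N"
  define l where "l = chain_lengths M d ell"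
  define l' where "l' = chain_lengths M d (\<lambda>_. L / real (N + 1))"
  have K: "K > 0" using assms(1) by (simp add: K_def)
  have "0 \<le> (\<Sum>i<N+1. ell i)" using assms(3) by (intro sum_nonneg) auto
  hence L0: "L \<ge> 0" using assms(4) by simp
  have idx: "j - (M - 1) < N + 1" if "j < K" for j using that assms(1) unfolding K_def by linarith
  have nnl: "l j \<ge> 0" if "j < K" for j
  proof (cases "j < M - 1")
    case True thus ?thesis using assms(2) by (simp add: l_def chain_lengths_def)
  next
    case False thus ?thesis using assms(3) idx[OF that] by (simp add: l_def chain_lengths_def)
  qed
  have nnl': "l' j \<ge> 0" if "j < K" for j
    using assms(2) L0 by (simp add: l'_def chain_lengths_def)
  note rl = rate_formula[OF K, of l, OF nnl]
  note rl' = rate_formula[OF K, of l', OF nnl']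
  define S where "S n = 1 - (\<Prod>j<K. gfun n (l j))" for n
  define S' where "S' n = 1 - (\<Prod>j<K. gfun n (l' j))" for n
  have smS: "summable S" using rl(1) unfolding S_def .
  have smS': "summable S'" using rl'(1) unfolding S'_def .
  have pw: "S' n \<le> S n" for n
  proof -
    have sp: "(\<Prod>j<K. gfun n (l j)) = (\<Prod>j<M-1. gfun n (d j)) * (\<Prod>i<N+1. gfun n (ell i))"
      unfolding K_def l_def by (rule prod_split[OF assms(1)])
    have sp': "(\<Prod>j<K. gfun n (l' j)) = (\<Prod>j<M-1. gfun n (d j)) * (\<Prod>i<N+1. gfun n (L / real (N+1)))"
      unfolding K_def l'_def by (rule prod_split[OF assms(1)])
    have Dn: "0 \<le> (\<Prod>j<M-1. gfun n (d j))"
      using assms(2) by (intro prod_nonneg) (auto intro: gfun_bounds)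
    have En: "(\<Prod>i<N+1. gfun n (ell i)) \<le> (\<Prod>i<N+1. gfun n (L / real (N+1)))"
    proof (cases "n = 0")
      case True thus ?thesis by (simp add: gfun_def)
    next
      case False
      hence "n \<ge> 1" by simp
      from jensen_part[OF this assms(3) assms(4)] show ?thesis by simp
    qed
    show ?thesis unfolding S_def S'_def sp sp' using mult_left_mono[OF En Dn] by simp
  qed
  define E where "E = (\<Sum>n. S n)"
  define E' where "E' = (\<Sum>n. S' n)"
  have EE: "E' \<le> E" unfolding E_def E'_def by (rule suminf_le[OF pw smS' smS])
  have S'nn: "0 \<le> S' n" for n
  proof -
    have "(\<Prod>j<K. gfun n (l' j)) \<le> 1"
      using nnl' by (intro prod_le_1) (auto intro: gfun_bounds)
    thus ?thesis unfolding S'_def by simp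
  qed
  have "S' 0 = 1" using K unfolding S'_def by (simp add: gfun_def)
  moreover have "sum S' {0} \<le> E'" unfolding E'_def
    by (rule sum_le_suminf[OF smS']) (use S'nn in auto)
  ultimately have E1: "E' \<ge> 1" by simp
  define Ml where "Ml = Max (l ` {..<K})"
  define Ml' where "Ml' = Max (l' ` {..<K})"
  have fin: "finite (l ` {..<K})" "l ` {..<K} \<noteq> {}" using K by auto
  have fin': "finite (l' ` {..<K})" "l' ` {..<K} \<noteq> {}" using K by auto
  have Mlge: "l j \<le> Ml" if "j < K" for j unfolding Ml_def using fin that by (intro Max_ge) auto
  have Ml'ge: "l' j \<le> Ml'" if "j < K" for j unfolding Ml'_def using fin' that by (intro Max_ge) auto
  have Ml0: "0 \<le> Ml" using Mlge[OF K] nnl[OF K] by linarith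
  have Ml'0: "0 \<le> Ml'" using Ml'ge[OF K] nnl'[OF K] by linarith
  obtain i0 where i0: "i0 < N + 1" "ell i0 \<ge> L / real (N+1)"
  proof (rule ccontr)
    assume "\<not> thesis"
    hence lt: "\<forall>i<N+1. ell i < L / real (N+1)" using that by force
    have "(\<Sum>i<N+1. ell i) < (\<Sum>i<N+1. L / real (N+1))"
      by (rule sum_strict_mono) (use lt in auto)
    thus False using assms(4) by simp
  qed
  have li0: "l (i0 + (M - 1)) = ell i0" "i0 + (M - 1) < K"
    using i0(1) assms(1) by (auto simp: l_def chain_lengths_def K_def)
  have MM: "Ml' \<le> Ml"
    unfolding Ml'_def
  proof (rule Max.boundedI[OF fin'])
    fix x assume "x \<in> l' ` {..<K}"
    then obtain j where j: "j < K" "x = l' j" by auto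
    show "x \<le> Ml"
    proof (cases "j < M - 1")
      case True
      hence "l' j = l j" by (simp add: l_def l'_def chain_lengths_def)
      thus ?thesis using j Mlge by simp
    next
      case False
      hence "l' j = L / real (N+1)" by (simp add: l'_def chain_lengths_def)
      thus ?thesis using j i0 li0 Mlge[OF li0(2)] by simp
    qed
  qed
  have Mz: "Ml = 0" if "Ml' = 0"
  proof -
    have "l j \<le> 0" if j: "j < K" for j
    proof (cases "j < M - 1")
      case True
      hence "l' j = l j" by (simp add: l_def l'_def chain_lengths_def)
      thus ?thesis using Ml'ge[OF j] \<open>Ml' = 0\<close> by simp
    next
      case False
      hence "l' j = L / real (N+1)" by (simp add: l'_def chain_lengths_def)
      hence "L \<le> 0" using Ml'ge[OF j] \<open>Ml' = 0\<close> by (simp add: divide_le_0_iff)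
      moreover have "ell (j - (M - 1)) \<le> L"
        unfolding assms(4)[symmetric] using idx[OF j] assms(3)
        by (intro member_le_sum) auto
      moreover have "l j = ell (j - (M - 1))" using False by (simp add: l_def chain_lengths_def)
      ultimately show ?thesis by simp
    qed
    hence "Ml \<le> 0" unfolding Ml_def using fin by (intro Max.boundedI) auto
    thus ?thesis using Ml0 by simp
  qed
  have rate: "ent_rate K l = 1 / ((Ml / c_light) * E)"
    using rl(2) unfolding t_att_def Ml_def E_def S_def .
  have rate': "ent_rate K l' = 1 / ((Ml' / c_light) * E')"
    using rl'(2) unfolding t_att_def Ml'_def E'_def S'_def .
  have "ent_rate K l \<le> ent_rate K l'"
  proof (cases "Ml' = 0")
    case True
    thus ?thesis using Mz rate rate' by simp
  next
    case False
    hence pos: "0 < (Ml' / c_light) * E'" using Ml'0 E1 by (simp add: c_light_def)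
    have "(Ml' / c_light) * E' \<le> (Ml / c_light) * E"
      using MM EE E1 Ml'0 by (intro mult_mono divide_right_mono) (auto simp: c_light_def)
    moreover have "\<And>a b :: real. 0 < b \<Longrightarrow> b \<le> a \<Longrightarrow> 1 / a \<le> 1 / b"
      by (simp add: frac_le)
    ultimately show ?thesis unfolding rate rate' using pos by blast
  qed
  thus ?thesis unfolding K_def l_def l'_def .
qed


end
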